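(* Let $G$ be a non-complete finite simple graph of order $n$ with $\delta(G)\geq 1$. Then $\alpha^*(G)\leq \frac{2(n-1)}{\sigma_2(G)}$.
   Context: $\sigma_2(G)=\min\{d_G(u)+d_G(v): u\neq v,\ uv\notin E(G)\}$. An independent set $I$ of $G$ is light if $\sum_{u\in I}d_G(u)\le |V(G)|-1$; $\alpha^*(G)$ is the maximum size of a light independent set of $G$. *)

theory Defs
  imports Complex_Main
begin

definition simple_graph :: "'a set \<Rightarrow> ('a \<Rightarrow> 'a \<Rightarrow> bool) \<Rightarrow> bool" where
  "simple_graph V E \<longleftrightarrow> finite V \<and> (\<forall>u v. E u v \<longrightarrow> u \<in> V \<and> v \<in> V)
     \<and> (\<forall>u v. E u v \<longrightarrow> E v u) \<and> (\<forall>u. \<not> E u u)"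

definition degree :: "'a set \<Rightarrow> ('a \<Rightarrow> 'a \<Rightarrow> bool) \<Rightarrow> 'a \<Rightarrow> nat" where
  "degree V E u = card {v \<in> V. E u v}"

definition min_degree :: "'a set \<Rightarrow> ('a \<Rightarrow> 'a \<Rightarrow> bool) \<Rightarrow> nat" where
  "min_degree V E = Min (degree V E ` V)"

definition complete_graph :: "'a set \<Rightarrow> ('a \<Rightarrow> 'a \<Rightarrow> bool) \<Rightarrow> bool" where
  "complete_graph V E \<longleftrightarrow> (\<forall>u\<in>V. \<forall>v\<in>V. u \<noteq> v \<longrightarrow> E u v)"

definition sigma2 :: "'a set \<Rightarrow> ('a \<Rightarrow> 'a \<Rightarrow> bool) \<Rightarrow> nat" where
  "sigma2 V E = Min {degree V E u + degree V E v | u v. u \<in> V \<and> v \<in> V \<and> u \<noteq> v \<and> \<not> E u v}"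

definition independent_set :: "'a set \<Rightarrow> ('a \<Rightarrow> 'a \<Rightarrow> bool) \<Rightarrow> 'a set \<Rightarrow> bool" where
  "independent_set V E I \<longleftrightarrow> I \<subseteq> V \<and> (\<forall>u\<in>I. \<forall>v\<in>I. \<not> E u v)"

definition light_independent_set :: "'a set \<Rightarrow> ('a \<Rightarrow> 'a \<Rightarrow> bool) \<Rightarrow> 'a set \<Rightarrow> bool" where
  "light_independent_set V E I \<longleftrightarrow> independent_set V E I
     \<and> (\<Sum>u\<in>I. degree V E u) + 1 \<le> card V"

text \<open>alpha^*(G): maximum size of a light independent set (the empty set is light,
so the set below is nonempty when V is nonempty).\<close>
definition alpha_star :: "'a set \<Rightarrow> ('a \<Rightarrow> 'a \<Rightarrow> bool) \<Rightarrow> nat" where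
  "alpha_star V E = Max {card I | I. light_independent_set V E I}"

end

theory Submission
  imports Defs
begin

lemma arith_aux:
  fixes k s d0 :: nat
  assumes "k \<ge> 2" "2 * d0 < s"
  shows "k * s \<le> 2 * (d0 + (k - 1) * (s - d0))"
proof -
  obtain j where j: "k = j + 2" using assms(1) by (metis add.commute le_Suc_ex)
  obtain t where t: "s = d0 + t" using assms(2) by (metis le_add1 le_Suc_ex le_trans less_imp_le mult_2)
  have "d0 \<le> t" using assms(2) t by simp
  hence "j * d0 \<le> j * t" by simp
  thus ?thesis unfolding j t by (simp add: algebra_simps)
qed

lemma pair_sum:
  fixes f :: "'a \<Rightarrow> nat"
  assumes fin: "finite I" and k2: "card I \<ge> 2"
    and pr: "\<And>u v. u \<in> I \<Longrightarrow> v \<in> I \<Longrightarrow> u \<noteq> v \<Longrightarrow> s \<le> f u + f v"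
  shows "card I * s \<le> 2 * sum f I"
proof (cases "\<forall>v\<in>I. s \<le> 2 * f v")
  case True
  have "card I * s = (\<Sum>v\<in>I. s)" by simp
  also have "\<dots> \<le> (\<Sum>v\<in>I. 2 * f v)" using True by (intro sum_mono) auto
  also have "\<dots> = 2 * sum f I" by (simp add: sum_distrib_left)
  finally show ?thesis .
next
  case False
  then obtain u0 where u0: "u0 \<in> I" "2 * f u0 < s" by auto
  have "(\<Sum>v\<in>I-{u0}. s - f u0) \<le> (\<Sum>v\<in>I-{u0}. f v)"
    using pr u0(1) by (intro sum_mono) (auto, metis add_diff_cancel_left' diff_le_mono)
  moreover have "(\<Sum>v\<in>I-{u0}. s - f u0) = (card I - 1) * (s - f u0)"
    using u0 fin by simp
  moreover have "sum f I = f u0 + sum f (I - {u0})"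
    using fin u0(1) by (simp add: sum.remove)
  ultimately have "f u0 + (card I - 1) * (s - f u0) \<le> sum f I" by linarith
  moreover have "card I * s \<le> 2 * (f u0 + (card I - 1) * (s - f u0))"
    using arith_aux[OF k2 u0(2)] .
  ultimately show ?thesis by (meson le_trans mult_le_mono2)
qed

theorem proposition1p7:
  fixes V :: "'a set" and E :: "'a \<Rightarrow> 'a \<Rightarrow> bool"
  assumes "simple_graph V E"
    and "V \<noteq> {}"
    and "\<not> complete_graph V E"
    and "min_degree V E \<ge> 1"
  shows "real (alpha_star V E) \<le> 2 * (real (card V) - 1) / real (sigma2 V E)"
proof -
  have finV: "finite V" and sym: "\<And>u v. E u v \<Longrightarrow> E v u" and irr: "\<And>u. \<not> E u u"
    using assms(1) unfolding simple_graph_def by auto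
  have n1: "card V \<ge> 1" using finV assms(2) by (simp add: Suc_le_eq card_gt_0_iff)
  have deg1: "degree V E v \<ge> 1" if "v \<in> V" for v
  proof -
    have "min_degree V E \<le> degree V E v" unfolding min_degree_def
      using finV that by (intro Min_le) auto
    thus ?thesis using assms(4) by linarith
  qed
  have degle: "degree V E u \<le> card V - 2" if "u \<in> V" "v \<in> V" "u \<noteq> v" "\<not> E u v" for u v
  proof -
    have "{w \<in> V. E u w} \<subseteq> V - {u, v}" using that irr by auto
    hence "degree V E u \<le> card (V - {u, v})" unfolding degree_def
      using finV by (intro card_mono) auto
    also have "\<dots> = card V - 2" using that finV by (simp add: card_Diff_subset)
    finally show ?thesis .
  qed
  define S where "S = {degree V E u + degree V E v | u v. u \<in> V \<and> v \<in> V \<and> u \<noteq> v \<and> \<not> E u v}"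
  have finS: "finite S"
  proof -
    have "S \<subseteq> (\<lambda>(u,v). degree V E u + degree V E v) ` (V \<times> V)" unfolding S_def by auto
    thus ?thesis using finV finite_subset by blast
  qed
  have neS: "S \<noteq> {}" using assms(3) unfolding S_def complete_graph_def by auto
  have sS: "sigma2 V E \<in> S" unfolding sigma2_def S_def[symmetric] using finS neS by (rule Min_in)
  have sle: "sigma2 V E \<le> degree V E u + degree V E v"
    if "u \<in> V" "v \<in> V" "u \<noteq> v" "\<not> E u v" for u v
    unfolding sigma2_def S_def[symmetric] using finS that by (intro Min_le) (auto simp: S_def)
  obtain u v where uv: "u \<in> V" "v \<in> V" "u \<noteq> v" "\<not> E u v" "sigma2 V E = degree V E u + degree V E v"
    using sS unfolding S_def by auto
  have spos: "sigma2 V E \<ge> 2" using uv(5) deg1[OF uv(1)] deg1[OF uv(2)] by linarith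
  have sup: "sigma2 V E \<le> 2 * (card V - 2)"
    using uv degle[of u v] degle[of v u] sym by fastforce
  define A where "A = {card I | I. light_independent_set V E I}"
  have finA: "finite A"
  proof -
    have "A \<subseteq> {0..card V}" unfolding A_def light_independent_set_def independent_set_def
      using finV by (auto intro: card_mono)
    thus ?thesis using finite_subset by blast
  qed
  have "0 \<in> A" unfolding A_def light_independent_set_def independent_set_def using n1
    by (auto intro!: exI[of _ "{}"])
  hence "alpha_star V E \<in> A" unfolding alpha_star_def A_def[symmetric] using finA
    by (intro Max_in) auto
  then obtain I where I: "light_independent_set V E I" "alpha_star V E = card I"
    unfolding A_def by auto
  have IV: "I \<subseteq> V" and indep: "\<And>x y. x \<in> I \<Longrightarrow> y \<in> I \<Longrightarrow> \<not> E x y"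
    and light: "(\<Sum>x\<in>I. degree V E x) + 1 \<le> card V"
    using I(1) unfolding light_independent_set_def independent_set_def by auto
  have finI: "finite I" using IV finV finite_subset by blast
  have key: "card I * sigma2 V E \<le> 2 * (card V - 1)"
  proof -
    consider "card I = 0" | "card I = 1" | "card I \<ge> 2" by linarith
    thus ?thesis
    proof cases
      case 3
      have "card I * sigma2 V E \<le> 2 * (\<Sum>x\<in>I. degree V E x)"
        using pair_sum[OF finI 3] sle IV indep by blast
      thus ?thesis using light by linarith
    qed (use sup in auto)
  qed
  have "real (card I) * real (sigma2 V E) \<le> 2 * (real (card V) - 1)"
  proof -
    have "real (card I * sigma2 V E) \<le> real (2 * (card V - 1))" using key by linarith
    thus ?thesis using n1 by (simp add: of_nat_diff)
  qed
  thus ?thesis using I(2) spos by (simp add: pos_le_divide_eq)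
qed

end
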